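(* Let $\beta\in(-\tfrac12,\tfrac12)$. Then there is a constant $D$ depending only on $\beta$ such that, for all sufficiently large positive integers $n$ and all $z\in\mathbb{C}$, $$\left|n^{\frac12-\beta}\,C_{4n}^{(\beta+1/2)}\!\left(\frac{z}{4n}\right)\right|\le D\cosh(2|z|).$$ Moreover, $$\lim_{n\to\infty}(2n)^{1/2-\beta}\,\Gamma\!\left(\beta+\tfrac12\right)C_{4n}^{(\beta+1/2)}\!\left(\frac{z}{4n}\right)=\cos(z),$$ and the convergence is uniform on every compact subset of $\mathbb{C}$.
   Context: For $a\in\mathbb{C}$ and integer $k\ge0$, $(a)_k=\Gamma(a+k)/\Gamma(a)$ denotes the shifted factorial. For $\lambda>0$ and integer $m\ge0$, the ultraspherical (Gegenbauer) polynomial is $$C_m^{(\lambda)}(x)=\frac{(2\lambda)_m}{m!}\sum_{k=0}^{m}\frac{(-m)_k(m+2\lambda)_k}{(\lambda+\frac12)_k\,k!}\left(\frac{1-x}{2}\right)^k.$$ *)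

theory Defs
  imports "HOL-Analysis.Analysis"
begin

definition gegenbauer :: "real \<Rightarrow> nat \<Rightarrow> complex \<Rightarrow> complex" where
  "gegenbauer lam m x =
     (pochhammer (complex_of_real (2 * lam)) m / fact m) *
     (\<Sum>k = 0..m. pochhammer (- of_nat m) k * pochhammer (of_nat m + complex_of_real (2 * lam)) k
        / (pochhammer (complex_of_real (lam + 1/2)) k * fact k) * ((1 - x) / 2) ^ k)"

end

theory Submission
  imports Defs "HOL-Computational_Algebra.Polynomial" "HOL-Real_Asymp.Real_Asymp"
begin


definition cf :: "complex \<Rightarrow> nat \<Rightarrow> nat \<Rightarrow> complex" where
  "cf a m k = pochhammer (- of_nat m) k * pochhammer (of_nat m + 2*a) k / (pochhammer (a + 1/2) k * fact k)"

definition gc :: "complex \<Rightarrow> nat \<Rightarrow> complex \<Rightarrow> complex" where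
  "gc a m x = pochhammer (2*a) m / fact m * (\<Sum>k=0..m. cf a m k * ((1-x)/2)^k)"

definition TT :: "complex poly" where "TT = [:1/2, -1/2:]"

definition GP :: "complex \<Rightarrow> nat \<Rightarrow> complex poly" where
  "GP a m = smult (pochhammer (2*a) m / fact m) (\<Sum>k=0..m. smult (cf a m k) (TT^k))"

lemma gegenbauer_gc: "gegenbauer lam m x = gc (of_real lam) m x"
  unfolding gegenbauer_def gc_def cf_def by (simp add: of_real_add)

lemma poly_TT: "poly TT x = (1-x)/2"
  by (simp add: TT_def field_simps)

lemma poly_GP: "poly (GP a m) x = gc a m x"
  by (simp add: GP_def gc_def poly_sum poly_TT)

lemma pderiv_TT_pow: "pderiv (TT^k) = smult (- of_nat k / 2) (TT^(k-1))"
  by (simp add: pderiv_power TT_def pderiv_pCons mult.commute)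

lemma poch_nz: "Re a > 0 \<Longrightarrow> pochhammer (a + 1/2) k \<noteq> 0"
proof
  assume "Re a > 0" "pochhammer (a + 1/2) k = 0"
  then obtain j where "a + 1/2 = - of_nat j" by (auto simp: pochhammer_eq_0_iff)
  hence "Re (a + 1/2) = Re (- of_nat j)" by simp
  with \<open>Re a > 0\<close> show False by simp
qed

lemma cf_Suc: assumes "Re a > 0"
  shows "cf a (Suc m) (Suc k) * of_nat (Suc k) =
     (-(of_nat (Suc m)) * (of_nat (Suc m) + 2*a)/(a+1/2)) * cf (a+1) m k"
proof -
  have e1: "pochhammer (- of_nat (Suc m)) (Suc k) = - of_nat (Suc m) * pochhammer (- of_nat m :: complex) k"
    by (simp add: pochhammer_rec)
  have e2: "pochhammer (of_nat (Suc m) + 2*a) (Suc k) = (of_nat (Suc m) + 2*a) * pochhammer (of_nat m + 2*(a+1)) k"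
    unfolding pochhammer_rec by (simp add: algebra_simps)
  have e3: "pochhammer (a + 1/2) (Suc k) = (a+1/2) * pochhammer (a + 1 + 1/2) k"
    unfolding pochhammer_rec by (simp add: algebra_simps)
  have nz: "pochhammer (a + 1 + 1/2) k \<noteq> 0" using poch_nz[of "a+1" k] assms by (simp add: add.assoc)
  have nz2: "a + 1/2 \<noteq> 0" using assms by (auto simp: complex_eq_iff)
  have sk: "of_nat (Suc k) \<noteq> (0::complex)" by (simp only: of_nat_eq_0_iff)
  have nzf: "(fact k :: complex) \<noteq> 0" by simp
  have e4: "(fact (Suc k) :: complex) = of_nat (Suc k) * fact k" by (simp del: of_nat_Suc)
  have gen: "\<And>M Q P1 P2 P3 F c K. P3 \<noteq> 0 \<Longrightarrow> F \<noteq> 0 \<Longrightarrow> c \<noteq> 0 \<Longrightarrow> K \<noteq> (0::complex) \<Longrightarrow>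
      (-M*P1)*(Q*P2)/((c*P3)*(K*F)) * K = (-M*Q/c)*(P1*P2/(P3*F))"
    by (simp add: field_simps)
  show ?thesis unfolding cf_def e1 e2 e3 e4
    by (rule gen[OF nz nzf nz2 sk])
qed

lemma smult_sum_right: "smult c (sum f A) = (\<Sum>x\<in>A. smult c (f x))"
  by (induction A rule: infinite_finite_induct) (auto simp: smult_add_right)

lemma pderiv_sum': "pderiv (sum f A) = (\<Sum>x\<in>A. pderiv (f x))"
  using higher_pderiv_sum[of 1 f A] by simp

lemma const_id: assumes "Re a > 0"
  shows "pochhammer (2*a) (Suc m) / fact (Suc m) * ((-(of_nat (Suc m)) * (of_nat (Suc m) + 2*a)/(a+1/2)) * (-1/2))
      = 2*a * (pochhammer (2*(a+1)) m / fact m)"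
proof -
  have e1: "pochhammer (2*a) (Suc m) = 2*a * pochhammer (2*a+1) m" by (simp add: pochhammer_rec)
  have e2: "pochhammer (2*a+1) m * (of_nat (Suc m) + 2*a) = (2*a+1) * pochhammer (2*(a+1)) m"
  proof -
    have "pochhammer (2*a+1) (Suc m) = (2*a+1 + of_nat m) * pochhammer (2*a+1) m" by (simp add: pochhammer_rec')
    moreover have "pochhammer (2*a+1) (Suc m) = (2*a+1) * pochhammer (2*(a+1)) m"
      unfolding pochhammer_rec by (simp add: algebra_simps)
    ultimately show ?thesis by (simp add: algebra_simps)
  qed
  have nz: "2*a+1 \<noteq> 0" using assms by (auto simp: complex_eq_iff)
  have ef: "(fact (Suc m) :: complex) = of_nat (Suc m) * fact m" by (simp del: of_nat_Suc)
  have sk: "of_nat (Suc m) \<noteq> (0::complex)" by (simp only: of_nat_eq_0_iff)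
  have nzf: "(fact m :: complex) \<noteq> 0" by simp
  have h: "a + 1/2 = (2*a+1)/2" by simp
  have gen: "\<And>P Q S F c X b. P*X = c*Q \<Longrightarrow> c \<noteq> 0 \<Longrightarrow> S \<noteq> 0 \<Longrightarrow> F \<noteq> (0::complex) \<Longrightarrow>
     b*P/(S*F) * ((-S)*X/(c/2) * (-1/2)) = b*(Q/F)"
  proof -
    fix P Q S F c X b :: complex
    assume h: "P*X = c*Q" "c \<noteq> 0" "S \<noteq> 0" "F \<noteq> 0"
    have "b*P/(S*F) * ((-S)*X/(c/2) * (-1/2)) = b*(P*X)/(F*c)" using h(2-4) by (simp add: field_simps)
    also have "\<dots> = b*(Q/F)" using h by (simp add: field_simps)
    finally show "b*P/(S*F) * ((-S)*X/(c/2) * (-1/2)) = b*(Q/F)" .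
  qed
  show ?thesis unfolding e1 ef h
    by (rule gen[OF e2 nz sk nzf])
qed

lemma pderiv_GP: assumes "Re a > 0"
  shows "pderiv (GP a (Suc m)) = smult (2*a) (GP (a+1) m)"
proof -
  define K where "K = pochhammer (2*a) (Suc m) / fact (Suc m)"
  define c0 where "c0 = (-(of_nat (Suc m)) * (of_nat (Suc m) + 2*a)/(a+1/2)) * (-1/2 :: complex)"
  have "pderiv (GP a (Suc m)) = smult K (\<Sum>k=0..Suc m. smult (cf a (Suc m) k) (pderiv (TT^k)))"
    by (simp only: GP_def K_def pderiv_smult pderiv_sum')
  also have "(\<Sum>k=0..Suc m. smult (cf a (Suc m) k) (pderiv (TT^k)))
      = (\<Sum>k=0..m. smult (cf a (Suc m) (Suc k) * (-(of_nat (Suc k))/2)) (TT^k))"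
    by (subst sum.atLeast0_atMost_Suc_shift) (simp add: pderiv_TT_pow del: of_nat_Suc)
  also have "\<dots> = (\<Sum>k=0..m. smult (c0 * cf (a+1) m k) (TT^k))"
  proof (rule sum.cong[OF refl])
    fix k
    have "cf a (Suc m) (Suc k) * (-(of_nat (Suc k))/2) = (cf a (Suc m) (Suc k) * of_nat (Suc k)) * (-1/2)"
      by (simp add: field_simps)
    also have "\<dots> = c0 * cf (a+1) m k" unfolding cf_Suc[OF assms] c0_def by simp
    finally show "smult (cf a (Suc m) (Suc k) * (-(of_nat (Suc k))/2)) (TT^k) = smult (c0 * cf (a+1) m k) (TT^k)"
      by simp
  qed
  also have "\<dots> = smult c0 (\<Sum>k=0..m. smult (cf (a+1) m k) (TT^k))"
    by (simp add: smult_sum_right)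
  finally have 1: "pderiv (GP a (Suc m)) = smult (K*c0) (\<Sum>k=0..m. smult (cf (a+1) m k) (TT^k))"
    by (simp only: smult_smult)
  have 2: "K*c0 = 2*a*(pochhammer (2*(a+1)) m / fact m)"
    using const_id[OF assms, of m] unfolding K_def c0_def by (simp only: mult.assoc)
  have 3: "smult (2*a) (GP (a+1) m) = smult (2*a*(pochhammer (2*(a+1)) m / fact m)) (\<Sum>k=0..m. smult (cf (a+1) m k) (TT^k))"
    by (simp only: GP_def smult_smult)
  show ?thesis unfolding 1 2 3 ..
qed



lemma pderiv_GP0: "pderiv (GP a 0) = 0"
  by (simp add: GP_def pderiv_pCons)

lemma coeff_GP: assumes "Re a > 0"
  shows "coeff (GP a m) j = (if j \<le> m then 2^j * pochhammer a j / fact j * gc (a + of_nat j) (m - j) 0 else 0)"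
  using assms
proof (induction j arbitrary: a m)
  case 0
  then show ?case by (simp add: poly_0_coeff_0[symmetric] poly_GP)
next
  case (Suc j)
  have sj: "of_nat (Suc j) \<noteq> (0::complex)" by (simp only: of_nat_eq_0_iff)
  have c: "coeff (GP a m) (Suc j) = coeff (pderiv (GP a m)) j / of_nat (Suc j)"
    using sj by (simp add: coeff_pderiv del: of_nat_Suc)
  show ?case
  proof (cases m)
    case 0
    then show ?thesis using c by (simp add: pderiv_GP0)
  next
    case (Suc m')
    have ra: "Re (a+1) > 0" using Suc.prems by simp
    have "coeff (GP a m) (Suc j) = 2*a * coeff (GP (a+1) m') j / of_nat (Suc j)"
      using c Suc pderiv_GP[OF Suc.prems, of m'] by simp
    also have "\<dots> = 2*a * (if j \<le> m' then 2^j * pochhammer (a+1) j / fact j * gc (a + 1 + of_nat j) (m' - j) 0 else 0) / of_nat (Suc j)"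
      using Suc.IH[OF ra] by simp
    also have "\<dots> = (if Suc j \<le> m then 2^(Suc j) * pochhammer a (Suc j) / fact (Suc j) * gc (a + of_nat (Suc j)) (m - Suc j) 0 else 0)"
    proof (cases "j \<le> m'")
      case True
      have e: "a + 1 + of_nat j = a + of_nat (Suc j)" by simp
      have p: "pochhammer a (Suc j) = a * pochhammer (a+1) j" by (simp add: pochhammer_rec)
      have f: "(fact (Suc j)::complex) = of_nat (Suc j) * fact j" by (simp del: of_nat_Suc)
      show ?thesis using True Suc unfolding e p f by (simp add: ac_simps del: of_nat_Suc)
    next
      case False
      then show ?thesis using Suc by simp
    qed
    finally show ?thesis .
  qed
qed

lemma gc_expand: assumes "Re a > 0"
  shows "gc a m x = (\<Sum>j\<le>m. 2^j * pochhammer a j / fact j * gc (a + of_nat j) (m - j) 0 * x^j)"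
proof -
  have d: "degree (GP a m) \<le> m"
    by (rule degree_le) (simp add: coeff_GP[OF assms])
  have "gc a m x = poly (\<Sum>i\<le>m. monom (coeff (GP a m) i) i) x"
    unfolding poly_as_sum_of_monoms'[OF d] poly_GP ..
  also have "\<dots> = (\<Sum>j\<le>m. coeff (GP a m) j * x^j)"
    by (simp add: poly_sum poly_monom)
  also have "\<dots> = (\<Sum>j\<le>m. 2^j * pochhammer a j / fact j * gc (a + of_nat j) (m - j) 0 * x^j)"
    by (rule sum.cong) (auto simp: coeff_GP[OF assms])
  finally show ?thesis .
qed



lemma cf_rec: assumes "Re a > 0"
  shows "cf a M (Suc k) * (of_nat (Suc k) * (a + 1/2 + of_nat k)) = cf a M k * ((- of_nat M + of_nat k) * (of_nat M + 2*a + of_nat k))"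
proof -
  have gen: "\<And>A B C S P1 P2 P3 F. C \<noteq> 0 \<Longrightarrow> P3 \<noteq> 0 \<Longrightarrow> S \<noteq> 0 \<Longrightarrow> F \<noteq> (0::complex) \<Longrightarrow>
     (A*P1)*(B*P2)/((C*P3)*(S*F)) * (S*C) = P1*P2/(P3*F) * (A*B)"
    by (simp add: field_simps)
  have sk: "of_nat (Suc k) \<noteq> (0::complex)" by (simp only: of_nat_eq_0_iff)
  have nzf: "(fact k :: complex) \<noteq> 0" by simp
  have f: "(fact (Suc k)::complex) = of_nat (Suc k) * fact k" by (simp del: of_nat_Suc)
  have c: "a + 1/2 + of_nat k \<noteq> 0" using assms by (auto simp: complex_eq_iff)
  show ?thesis unfolding cf_def pochhammer_rec' f
    by (rule gen[OF c poch_nz[OF assms] sk nzf])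
qed

lemma ode_sum: assumes "Re a > 0"
  shows "(\<Sum>k=0..M. cf a M k * (1/2)^k * (of_nat k * (of_nat k - 1) + of_nat M * (of_nat M + 2*a))) = 0"
proof -
  define g where "g k = 2 * (1/2)^k * of_nat k * (of_nat k + a - 1/2) * cf a M k" for k
  have gs: "g (Suc k) = (1/2)^k * (cf a M k * ((- of_nat M + of_nat k) * (of_nat M + 2*a + of_nat k)))" for k
  proof -
    have "g (Suc k) = (1/2)^k * (cf a M (Suc k) * (of_nat (Suc k) * (a + 1/2 + of_nat k)))"
      unfolding g_def by (simp add: field_simps)
    then show ?thesis unfolding cf_rec[OF assms] .
  qed
  have "(\<Sum>k=0..M. g (Suc k) - g k) = g (Suc M) - g 0" by (rule sum_Suc_diff) simp
  also have "\<dots> = 0" unfolding gs by (simp add: g_def)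
  finally have "(\<Sum>k=0..M. g (Suc k) - g k) = 0" .
  moreover have "g (Suc k) - g k = - (cf a M k * (1/2)^k * (of_nat k * (of_nat k - 1) + of_nat M * (of_nat M + 2*a)))" for k
    unfolding gs by (simp add: g_def algebra_simps)
  ultimately show ?thesis by (simp add: sum_negf)
qed

lemma pderiv2_TT_pow: "poly (pderiv (pderiv (TT^k))) 0 = of_nat k * (of_nat k - 1) * (1/2)^k"
proof (cases k)
  case 0 then show ?thesis by (simp add: pderiv_TT_pow pderiv_smult)
next
  case (Suc j)
  then show ?thesis
  proof (cases j)
    case 0 then show ?thesis using Suc by (simp add: TT_def pderiv_pCons)
  next
    case (Suc i)
    have "pderiv (pderiv (TT^k)) = smult (- of_nat k / 2) (smult (- of_nat (k-1)/2) (TT^(k-1-1)))"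
      by (simp only: pderiv_TT_pow pderiv_smult)
    then have "poly (pderiv (pderiv (TT^k))) 0 = (- of_nat k / 2) * ((- of_nat (k-1)/2) * (1/2)^(k-1-1))"
      by (simp only: poly_smult poly_power poly_TT) simp
    also have "\<dots> = of_nat k * (of_nat k - 1) * (1/2)^k"
      using Suc \<open>k = Suc j\<close> by (simp add: field_simps)
    finally show ?thesis .
  qed
qed

lemma gc_rec: assumes "Re a > 0"
  shows "of_nat (Suc (Suc m)) * (of_nat (Suc(Suc m)) + 2*a) * gc a (Suc (Suc m)) 0 = -4*a*(a+1) * gc (a+2) m 0"
proof -
  define M where "M = Suc (Suc m)"
  define K where "K = pochhammer (2*a) M / fact M"
  have ra: "Re (a+1) > 0" using assms by simp
  have A: "poly (pderiv (pderiv (GP a M))) 0 = 4*a*(a+1) * gc (a+2) m 0"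
  proof -
    have "pderiv (pderiv (GP a M)) = smult (2*a) (smult (2*(a+1)) (GP (a+1+1) m))"
      unfolding M_def pderiv_GP[OF assms] pderiv_smult pderiv_GP[OF ra] ..
    moreover have "a+1+1 = a+2" by simp
    ultimately show ?thesis by (simp add: poly_GP)
  qed
  have B: "poly (pderiv (pderiv (GP a M))) 0 = K * (\<Sum>k=0..M. cf a M k * (of_nat k * (of_nat k - 1) * (1/2)^k))"
    by (simp add: GP_def K_def pderiv_smult pderiv_sum' poly_sum pderiv2_TT_pow)
  have C: "(\<Sum>k=0..M. cf a M k * (of_nat k * (of_nat k - 1) * (1/2)^k)) = - (of_nat M * (of_nat M + 2*a)) * (\<Sum>k=0..M. cf a M k * (1/2)^k)"
  proof -
    have "0 = (\<Sum>k=0..M. cf a M k * (of_nat k * (of_nat k - 1) * (1/2)^k) + (of_nat M * (of_nat M + 2*a)) * (cf a M k * (1/2)^k))"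
      using ode_sum[OF assms, of M] by (simp add: algebra_simps)
    also have "\<dots> = (\<Sum>k=0..M. cf a M k * (of_nat k * (of_nat k - 1) * (1/2)^k)) + (of_nat M * (of_nat M + 2*a)) * (\<Sum>k=0..M. cf a M k * (1/2)^k)"
      by (simp add: sum.distrib sum_distrib_left)
    finally show ?thesis by (simp add: eq_neg_iff_add_eq_0)
  qed
  have D: "gc a M 0 = K * (\<Sum>k=0..M. cf a M k * (1/2)^k)"
    by (simp add: gc_def K_def)
  have "4*a*(a+1) * gc (a+2) m 0 = K * (- (of_nat M * (of_nat M + 2*a)) * (\<Sum>k=0..M. cf a M k * (1/2)^k))"
    unfolding A[symmetric] B C ..
  also have "\<dots> = - (of_nat M * (of_nat M + 2*a)) * gc a M 0"
    unfolding D by (simp only: ac_simps)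
  finally have "4*a*(a+1) * gc (a+2) m 0 = - (of_nat M * (of_nat M + 2*a)) * gc a M 0" .
  then have "- (4*a*(a+1) * gc (a+2) m 0) = - (- (of_nat M * (of_nat M + 2*a)) * gc a M 0)" by simp
  then show ?thesis unfolding M_def by (simp only: minus_minus mult_minus_left)
qed

lemma gc_zero: assumes "Re a > 0"
  shows "gc a (2*k) 0 = (-1)^k * pochhammer a k / fact k \<and> gc a (Suc (2*k)) 0 = 0"
  using assms
proof (induction k arbitrary: a)
  case 0
  have "2 + a*4 \<noteq> 0" using 0 by (auto simp: complex_eq_iff)
  moreover have "1 + a*2 \<noteq> 0" using 0 by (auto simp: complex_eq_iff)
  ultimately show ?case by (simp add: gc_def cf_def field_simps)
next
  case (Suc k)
  have ra: "Re (a+2) > 0" using Suc.prems by simp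
  note IH = Suc.IH[OF ra]
  have n1: "of_nat (Suc (Suc (2*k))) * (of_nat (Suc (Suc (2*k))) + 2*a) \<noteq> 0"
    using Suc.prems by (auto simp: complex_eq_iff)
  have n2: "of_nat (Suc (Suc (Suc (2*k)))) * (of_nat (Suc (Suc (Suc (2*k)))) + 2*a) \<noteq> 0"
    using Suc.prems by (auto simp: complex_eq_iff)
  have e1: "2 * Suc k = Suc (Suc (2*k))" by simp
  have e2: "Suc (2 * Suc k) = Suc (Suc (Suc (2*k)))" by simp
  have odd: "gc a (Suc (2 * Suc k)) 0 = 0"
    using gc_rec[OF Suc.prems, of "Suc (2*k)"] n2 unfolding e2 conjunct2[OF IH] by simp
  have p: "pochhammer a (Suc k) * (a + 1 + of_nat k) = a * (a+1) * pochhammer (a+2) k"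
  proof -
    have "pochhammer a (Suc (Suc k)) = (a + of_nat (Suc k)) * pochhammer a (Suc k)" by (rule pochhammer_rec')
    moreover have "pochhammer a (Suc (Suc k)) = a * ((a+1) * pochhammer (a+2) k)"
      unfolding pochhammer_rec by (simp add: add.assoc)
    ultimately show ?thesis by (simp add: algebra_simps)
  qed
  have nk: "a + 1 + of_nat k \<noteq> 0" using Suc.prems by (auto simp: complex_eq_iff)
  have "gc a (2 * Suc k) 0 = -4*a*(a+1) * ((-1)^k * pochhammer (a+2) k / fact k) /
          (of_nat (Suc (Suc (2*k))) * (of_nat (Suc (Suc (2*k))) + 2*a))"
    using gc_rec[OF Suc.prems, of "2*k"] n1 unfolding e1 conjunct1[OF IH]
    by (metis nonzero_mult_div_cancel_left)
  also have "\<dots> = -4 * (pochhammer a (Suc k) * (a + 1 + of_nat k)) * (-1)^k / fact k /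
          (of_nat (Suc (Suc (2*k))) * (of_nat (Suc (Suc (2*k))) + 2*a))"
    unfolding p by (simp add: divide_inverse mult_ac)
  also have "\<dots> = (-1)^(Suc k) * pochhammer a (Suc k) / fact (Suc k)"
  proof -
    have f: "(fact (Suc k)::complex) = of_nat (Suc k) * fact k" by (simp del: of_nat_Suc)
    have q: "of_nat (Suc (Suc (2*k))) * (of_nat (Suc (Suc (2*k))) + 2*a) = 4 * (of_nat (Suc k) * (a + 1 + of_nat k))"
      by (simp add: algebra_simps)
    have sk: "of_nat (Suc k) \<noteq> (0::complex)" by (simp only: of_nat_eq_0_iff)
    have gen: "\<And>P c w F S. c \<noteq> 0 \<Longrightarrow> S \<noteq> 0 \<Longrightarrow> F \<noteq> (0::complex) \<Longrightarrow>
       -4*(P*c)*w/F/(4*(S*c)) = (-1)*w*P/(S*F)"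
      by (simp add: field_simps)
    show ?thesis unfolding f q power_Suc by (rule gen[OF nk sk]) simp

  qed
  finally show ?case using odd by simp
qed



definition AA :: "real \<Rightarrow> nat \<Rightarrow> nat \<Rightarrow> real" where
  "AA l n i = (if i \<le> 2*n then Gamma l * (2*real n) powr (1-l) * pochhammer l (2*n+i) / (fact (2*n-i) * (2*real n)^(2*i)) else 0)"

lemma term_even:
  fixes l :: real and z :: complex
  assumes l: "0 < l" and n: "n > 0" and i: "i \<le> 2*n"
  shows "of_real ((2*real n) powr (1-l) * Gamma l) *
     (2^(2*i) * pochhammer (of_real l) (2*i) / fact (2*i) * gc (of_real l + of_nat (2*i)) (4*n - 2*i) 0 * (z / of_nat (4*n))^(2*i))
   = of_real (cos_coeff (2*i) * AA l n i) * z^(2*i)"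
proof -
  define a where "a = (of_real l :: complex)"
  have ra: "Re (a + of_nat (2*i)) > 0" using l by (simp add: a_def)
  have e: "4*n - 2*i = 2*(2*n-i)" by simp
  have g: "gc (a + of_nat (2*i)) (4*n - 2*i) 0 = (-1)^(2*n-i) * pochhammer (a + of_nat (2*i)) (2*n-i) / fact (2*n-i)"
    unfolding e using gc_zero[OF ra] by blast
  have p: "pochhammer a (2*i) * pochhammer (a + of_nat (2*i)) (2*n-i) = of_real (pochhammer l (2*n+i))"
    using pochhammer_product'[of a "2*i" "2*n-i"] i by (simp add: a_def pochhammer_of_real add.commute)
  have s: "(-1::complex)^(2*n-i) = (-1)^i"
  proof -
    have "even (2*n-i) = even i" using i by auto
    then show ?thesis by (cases "even i") (simp_all add: neg_one_even_power neg_one_odd_power)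
  qed
  have w0: "z / of_nat (4*n) * 2 = z / of_real (2*real n)" using n by (simp add: field_simps)
  have w: "(z / of_nat (4*n))^(2*i) * 2^(2*i) = z^(2*i) / of_real ((2*real n)^(2*i))"
    by (subst power_mult_distrib[symmetric], subst w0, simp only: power_divide of_real_power)
  define C where "C = (of_real ((2*real n) powr (1-l) * Gamma l) :: complex)"
  define D where "D = (of_real ((2*real n)^(2*i)) :: complex)"
  have Dn: "D \<noteq> 0" using n by (simp add: D_def)
  have gen: "\<And>C P1 P2 P F2 Fm D w w2 T zz. P1*P2 = P \<Longrightarrow> w2*T = zz/D \<Longrightarrow> F2 \<noteq> 0 \<Longrightarrow> Fm \<noteq> 0 \<Longrightarrow> D \<noteq> (0::complex) \<Longrightarrow>
      C*(T*P1/F2*(w*P2/Fm)*w2) = (w/F2 * (C*P/(Fm*D)))*zz"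
    by (simp add: field_simps)
  have R: "of_real (cos_coeff (2*i) * AA l n i) = ((-1)^i/fact (2*i)) * (C * of_real (pochhammer l (2*n+i)) / (fact (2*n-i) * D))"
  proof -
    have c: "cos_coeff (2*i) = (-1)^i / fact (2*i)" by (simp add: cos_coeff_def)
    have A: "AA l n i = ((2*real n) powr (1-l) * Gamma l) * pochhammer l (2*n+i) / (fact (2*n-i) * (2*real n)^(2*i))"
      using i by (simp add: AA_def mult_ac)
    show ?thesis unfolding c A C_def D_def
      by (simp only: of_real_mult of_real_divide of_real_power of_real_fact of_real_minus of_real_1)
  qed
  show ?thesis unfolding g s R C_def[symmetric] a_def[symmetric]
    by (rule gen[OF p w[folded D_def]]) (simp_all add: Dn)
qed

lemma expand:
  fixes l :: real and z :: complex
  assumes l: "0 < l" and n: "n > 0"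
  shows "of_real ((2*real n) powr (1-l) * Gamma l) * gegenbauer l (4*n) (z / of_nat (4*n))
    = (\<Sum>j\<le>4*n. of_real (cos_coeff j * AA l n (j div 2)) * z^j)"
proof -
  have ra: "Re (of_real l :: complex) > 0" using l by simp
  show ?thesis
    unfolding gegenbauer_gc gc_expand[OF ra] sum_distrib_left
  proof (rule sum.cong[OF refl])
    fix j assume j: "j \<in> {..4*n}"
    show "of_real ((2*real n) powr (1-l) * Gamma l) *
       (2^j * pochhammer (of_real l) j / fact j * gc (of_real l + of_nat j) (4*n - j) 0 * (z / of_nat (4*n))^j)
       = of_real (cos_coeff j * AA l n (j div 2)) * z^j"
    proof (cases "even j")
      case True
      then obtain i where ji: "j = 2*i" by blast
      have "i \<le> 2*n" using j ji by simp
      then show ?thesis unfolding ji using term_even[OF l n] by simp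
    next
      case False
      have "odd (4*n - j)" using j False by auto
      then obtain k where k: "4*n - j = Suc (2*k)" by (metis oddE Suc_eq_plus1 add.commute)
      have rb: "Re (of_real l + of_nat j :: complex) > 0" using l by simp
      have "gc (of_real l + of_nat j) (4*n - j) 0 = 0" unfolding k using gc_zero[OF rb] by blast
      moreover have "cos_coeff j = 0" using False by (simp add: cos_coeff_def)
      ultimately show ?thesis by simp
    qed
  qed
qed



lemma AA_nonneg: "0 < l \<Longrightarrow> AA l n i \<ge> 0"
  by (simp add: AA_def pochhammer_pos less_imp_le)

lemma AA_Suc: assumes l: "0 < l" and i: "i < 2*n"
  shows "AA l n (Suc i) = AA l n i * ((l + 2*real n + real i) * (2*real n - real i) / (2*real n)^2)"
proof -
  have p: "pochhammer l (2*n + Suc i) = (l + 2*real n + real i) * pochhammer l (2*n+i)"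
    using pochhammer_rec'[of l "2*n+i"] by (simp add: add.assoc)
  have e: "2*n - i = Suc (2*n - Suc i)" using i by simp
  have f: "(fact (2*n - i) :: real) = (2*real n - real i) * fact (2*n - Suc i)"
    unfolding e fact_Suc using i by (simp add: of_nat_diff)
  have nz: "2*real n - real i \<noteq> 0" using i by simp
  have nz2: "2*real n \<noteq> 0" using i by simp
  have q: "(2*real n)^(2*Suc i) = (2*real n)^(2*i) * (2*real n)^2"
    by (simp add: power_add[symmetric])
  show ?thesis unfolding AA_def using i nz nz2 unfolding p f q
    by (simp add: field_simps)
qed

lemma AA_bound: assumes l: "0 < l" "l < 1"
  shows "AA l n i \<le> AA l n 0 * 2^i"
proof (induction i)
  case 0 then show ?case by simp
next
  case (Suc i)
  show ?case
  proof (cases "i < 2*n")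
    case True
    define r where "r = (l + 2*real n + real i) * (2*real n - real i) / (2*real n)^2"
    have r0: "r \<ge> 0" using True l by (simp add: r_def)
    have r2: "r \<le> 2"
    proof -
      have "(l + 2*real n + real i) * (2*real n - real i) \<le> (4*real n) * (2*real n)"
        using True l by (intro mult_mono) auto
      moreover have "(2*real n)^2 > 0" using True by simp
      ultimately show ?thesis unfolding r_def by (simp add: field_simps power2_eq_square)
    qed
    have "AA l n (Suc i) = AA l n i * r" unfolding r_def by (rule AA_Suc[OF l(1) True])
    also have "\<dots> \<le> (AA l n 0 * 2^i) * 2"
      using Suc.IH r0 r2 AA_nonneg[OF l(1), of n i] by (intro mult_mono) auto
    finally show ?thesis by simp
  next
    case False
    then have "AA l n (Suc i) = 0" by (simp add: AA_def)
    then show ?thesis using AA_nonneg[OF l(1), of n 0] by simp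
  qed
qed

lemma AA0_lim: assumes l: "0 < l"
  shows "(\<lambda>n. AA l n 0) \<longlonglongrightarrow> 1"
proof -
  have g: "(\<lambda>N. Gamma l / Gamma_series' l N) \<longlonglongrightarrow> Gamma l / Gamma l"
  proof -
    have "Gamma l \<noteq> 0" using Gamma_real_pos[OF l] by simp
    then show ?thesis using Gamma_series'_LIMSEQ[of l] by (intro tendsto_divide tendsto_const) auto
  qed
  have "((\<lambda>N. Gamma l / Gamma_series' l N) \<circ> (\<lambda>n. 2*n)) \<longlonglongrightarrow> 1"
    using LIMSEQ_subseq_LIMSEQ[OF g, of "\<lambda>n. 2*n"] Gamma_real_pos[OF l] by (simp add: strict_mono_def)
  moreover have "eventually (\<lambda>n. ((\<lambda>N. Gamma l / Gamma_series' l N) \<circ> (\<lambda>n. 2*n)) n = AA l n 0) sequentially"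
    using eventually_gt_at_top[of 0]
  proof eventually_elim
    case (elim n)
    define N where "N = 2*n"
    have N: "N > 0" using elim by (simp add: N_def)
    have rN: "real N = 2 * real n" by (simp add: N_def)
    have fN: "(fact N :: real) = real N * fact (N - 1)"
      using N by (metis fact_reduce of_nat_fact)
    have ex: "exp (l * ln (real N)) = real N powr l" using N by (simp add: powr_def)
    have pw: "real N powr (1 - l) = real N / real N powr l" using N by (simp add: powr_diff)
    have "Gamma l / Gamma_series' l N = Gamma l * pochhammer l N / (fact (N-1) * real N powr l)"
      unfolding Gamma_series'_def using ex by simp
    also have "\<dots> = AA l n 0"
      unfolding AA_def using N pochhammer_pos[OF l, of N] unfolding rN[symmetric] N_def[symmetric]
      by (simp add: fN pw field_simps)
    finally show ?case by (simp add: N_def)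
  qed
  ultimately show ?thesis by (rule Lim_transform_eventually)
qed

lemma AA_lim: assumes l: "0 < l"
  shows "(\<lambda>n. AA l n i) \<longlonglongrightarrow> 1"
proof (induction i)
  case 0 then show ?case using AA0_lim[OF l] .
next
  case (Suc i)
  have r: "(\<lambda>n. (l + 2*real n + real i) * (2*real n - real i) / (2*real n)^2) \<longlonglongrightarrow> 1"
    by real_asymp
  have "(\<lambda>n. AA l n i * ((l + 2*real n + real i) * (2*real n - real i) / (2*real n)^2)) \<longlonglongrightarrow> 1 * 1"
    by (rule tendsto_mult[OF Suc.IH r])
  moreover have "eventually (\<lambda>n. AA l n i * ((l + 2*real n + real i) * (2*real n - real i) / (2*real n)^2) = AA l n (Suc i)) sequentially"
    using eventually_gt_at_top[of i] by eventually_elim (simp add: AA_Suc[OF l])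
  ultimately show ?case by (simp add: Lim_transform_eventually)
qed



lemma cos_coeff_abs: "\<bar>cos_coeff j\<bar> \<le> 1 / fact j"
  by (simp add: cos_coeff_def)

lemma exp_partial: "r \<ge> 0 \<Longrightarrow> (\<Sum>j\<le>N. r^j / fact j) \<le> exp (r::real)"
proof -
  assume r: "r \<ge> 0"
  have s: "summable (\<lambda>j. r^j /\<^sub>R fact j)" using exp_converges[of r] by (rule sums_summable)
  have "(\<Sum>j\<le>N. r^j /\<^sub>R fact j) \<le> (\<Sum>j. r^j /\<^sub>R fact j)"
    by (rule sum_le_suminf[OF s]) (use r in auto)
  also have "\<dots> = exp r" using exp_converges[of r] by (rule sums_unique[symmetric])
  finally show ?thesis by (simp add: divide_inverse mult.commute)
qed

lemma term_bound:
  assumes l: "0 < l" "l < 1" and B: "\<And>n. AA l n 0 \<le> B"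
  shows "\<bar>cos_coeff j * AA l n (j div 2)\<bar> \<le> B * 2^j / fact j"
proof -
  have "AA l n (j div 2) \<le> AA l n 0 * 2^(j div 2)" by (rule AA_bound[OF l])
  also have "\<dots> \<le> B * 2^j"
    using B[of n] AA_nonneg[OF l(1), of n 0]
    by (intro mult_mono power_increasing) auto
  finally have a: "AA l n (j div 2) \<le> B * 2^j" .
  have "\<bar>cos_coeff j * AA l n (j div 2)\<bar> = \<bar>cos_coeff j\<bar> * AA l n (j div 2)"
    using AA_nonneg[OF l(1)] by (simp add: abs_mult)
  also have "\<dots> \<le> (1 / fact j) * (B * 2^j)"
    using a cos_coeff_abs[of j] AA_nonneg[OF l(1), of n "j div 2"]
    by (intro mult_mono) auto
  finally show ?thesis by simp
qed

lemma main_bound: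
  assumes l: "0 < l" "l < 1" and B: "\<And>n. AA l n 0 \<le> B" and n: "n > 0"
  shows "cmod (of_real ((2*real n) powr (1-l) * Gamma l) * gegenbauer l (4*n) (z / of_nat (4*n))) \<le> B * exp (2 * cmod z)"
proof -
  have "cmod (of_real ((2*real n) powr (1-l) * Gamma l) * gegenbauer l (4*n) (z / of_nat (4*n)))
      = cmod (\<Sum>j\<le>4*n. of_real (cos_coeff j * AA l n (j div 2)) * z^j)" unfolding expand[OF l(1) n] ..
  also have "\<dots> \<le> (\<Sum>j\<le>4*n. cmod (of_real (cos_coeff j * AA l n (j div 2)) * z^j))" by (rule norm_sum)
  also have "\<dots> \<le> (\<Sum>j\<le>4*n. B * ((2 * cmod z)^j / fact j))"
  proof (rule sum_mono)
    fix j
    have "cmod (of_real (cos_coeff j * AA l n (j div 2)) * z^j) = \<bar>cos_coeff j * AA l n (j div 2)\<bar> * cmod z ^ j"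
      by (simp add: norm_mult norm_power abs_mult)
    also have "\<dots> \<le> (B * 2^j / fact j) * cmod z ^ j"
      by (rule mult_right_mono[OF term_bound[OF l B]]) simp
    also have "\<dots> = B * ((2 * cmod z)^j / fact j)" by (simp add: power_mult_distrib)
    finally show "cmod (of_real (cos_coeff j * AA l n (j div 2)) * z^j) \<le> B * ((2 * cmod z)^j / fact j)" .
  qed
  also have "\<dots> = B * (\<Sum>j\<le>4*n. (2 * cmod z)^j / fact j)" by (simp add: sum_distrib_left)
  also have "\<dots> \<le> B * exp (2 * cmod z)"
  proof -
    have "B \<ge> 0" using B[of n] AA_nonneg[OF l(1), of n 0] by simp
    then show ?thesis by (intro mult_left_mono exp_partial) auto
  qed
  finally show ?thesis .
qed

lemma t_zero: "4*n < j \<Longrightarrow> cos_coeff j * AA l n (j div 2) = 0"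
  by (cases "even j") (auto simp: cos_coeff_def AA_def)

lemma main_unif:
  assumes l: "0 < l" "l < 1" and K: "compact K"
  shows "uniform_limit K (\<lambda>n z. of_real ((2*real n) powr (1-l) * Gamma l) * gegenbauer l (4*n) (z / of_nat (4*n))) cos sequentially"
proof -
  obtain B where B: "\<And>n. AA l n 0 \<le> B" and B0: "B \<ge> 0"
  proof -
    have "Bseq (\<lambda>n. AA l n 0)" using AA0_lim[OF l(1)] by (intro convergent_imp_Bseq convergentI)
    then obtain C where "C > 0" "\<And>n. norm (AA l n 0) \<le> C" by (auto elim: BseqE)
    then have "\<And>n. AA l n 0 \<le> C" by (metis abs_le_D1 real_norm_def)
    then show ?thesis using that[of C] \<open>C > 0\<close> by auto
  qed
  obtain R where R: "R > 0" "\<And>z. z \<in> K \<Longrightarrow> cmod z \<le> R"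
    using compact_imp_bounded[OF K] unfolding bounded_pos by auto
  define a where "a k n = \<bar>cos_coeff k\<bar> * R^k * \<bar>AA l n (k div 2) - 1\<bar>" for k n
  define M where "M k = (B+1) * (inverse (fact k) * (2*R)^k)" for k
  have aM: "a k n \<le> M k" for k n
  proof -
    have "\<bar>AA l n (k div 2) - 1\<bar> \<le> AA l n (k div 2) + 1" using AA_nonneg[OF l(1), of n "k div 2"] by simp
    also have "\<dots> \<le> AA l n 0 * 2^(k div 2) + 1" using AA_bound[OF l, of n "k div 2"] by simp
    also have "\<dots> \<le> B * 2^k + 2^k"
    proof -
      have "AA l n 0 * 2^(k div 2) \<le> B * 2^k"
        using B[of n] AA_nonneg[OF l(1), of n 0] by (intro mult_mono power_increasing) auto
      moreover have "(1::real) \<le> 2^k" by simp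
      ultimately show ?thesis by linarith
    qed
    finally have h: "\<bar>AA l n (k div 2) - 1\<bar> \<le> (B+1) * 2^k" by (simp add: algebra_simps)
    have "a k n \<le> (1 / fact k) * R^k * ((B+1) * 2^k)"
      unfolding a_def using cos_coeff_abs[of k] h R(1)
      by (intro mult_mono) auto
    also have "\<dots> = M k" by (simp add: M_def power_mult_distrib field_simps)
    finally show ?thesis .
  qed
  have a0: "a k n \<ge> 0" for k n using R(1) by (simp add: a_def)
  have sM: "summable M" unfolding M_def by (intro summable_mult summable_exp)
  have sa: "summable (\<lambda>k. a k n)" for n
    by (rule summable_comparison_test[OF _ sM]) (use aM a0 in auto)
  have alim: "(\<lambda>n. a k n) \<longlonglongrightarrow> 0" for k
  proof -
    have "(\<lambda>n. \<bar>cos_coeff k\<bar> * R^k * \<bar>AA l n (k div 2) - 1\<bar>) \<longlonglongrightarrow> \<bar>cos_coeff k\<bar> * R^k * \<bar>1 - 1\<bar>"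
      by (intro tendsto_intros AA_lim[OF l(1)])
    then show ?thesis by (simp add: a_def)
  qed
  have Elim: "(\<lambda>n. suminf (\<lambda>k. a k n)) \<longlonglongrightarrow> 0"
  proof -
    have bnd: "eventually (\<lambda>(k,n). norm (a k n) \<le> M k) (at_top \<times>\<^sub>F sequentially)"
    proof (rule always_eventually, clarify)
      fix k n show "norm (a k n) \<le> M k" using a0[of k n] aM[of k n] by simp
    qed
    have "((\<lambda>n. suminf (\<lambda>k. a k n)) \<longlonglongrightarrow> suminf (\<lambda>k. 0::real))"
      using tannerys_theorem[where a=a and b="\<lambda>_. 0" and M=M and F=sequentially, OF alim bnd sM]
      by simp
    then show ?thesis by simp
  qed
  have key: "dist (of_real ((2*real n) powr (1-l) * Gamma l) * gegenbauer l (4*n) (z / of_nat (4*n))) (cos z)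
      \<le> suminf (\<lambda>k. a k n)" if n: "n > 0" and z: "z \<in> K" for n z
  proof -
    define t where "t j = of_real (cos_coeff j * AA l n (j div 2)) * z^j" for j
    define c where "c j = of_real (cos_coeff j) * z^j" for j
    have ts: "t sums (of_real ((2*real n) powr (1-l) * Gamma l) * gegenbauer l (4*n) (z / of_nat (4*n)))"
    proof -
      have "t sums (\<Sum>j\<in>{..4*n}. t j)"
        by (rule sums_finite) (auto simp: t_def t_zero)
      then show ?thesis unfolding expand[OF l(1) n] t_def .
    qed
    have cs: "c sums cos z" using cos_converges[of z] unfolding c_def by (simp add: scaleR_conv_of_real)
    have ds: "(\<lambda>j. t j - c j) sums (of_real ((2*real n) powr (1-l) * Gamma l) * gegenbauer l (4*n) (z / of_nat (4*n)) - cos z)"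
      by (rule sums_diff[OF ts cs])
    have nb: "norm (t j - c j) \<le> a j n" for j
    proof -
      have "t j - c j = of_real (cos_coeff j * (AA l n (j div 2) - 1)) * z^j"
        by (simp add: t_def c_def algebra_simps)
      then have "norm (t j - c j) = \<bar>cos_coeff j\<bar> * \<bar>AA l n (j div 2) - 1\<bar> * cmod z ^ j"
        by (simp only: norm_mult norm_power norm_of_real abs_mult)
      also have "\<dots> \<le> \<bar>cos_coeff j\<bar> * \<bar>AA l n (j div 2) - 1\<bar> * R ^ j"
        using R(2)[OF z] by (intro mult_left_mono power_mono) auto
      finally show ?thesis by (simp add: a_def mult_ac)
    qed
    have sn: "summable (\<lambda>j. norm (t j - c j))"
      by (rule summable_comparison_test[OF _ sa]) (use nb in auto)
    have "dist (of_real ((2*real n) powr (1-l) * Gamma l) * gegenbauer l (4*n) (z / of_nat (4*n))) (cos z)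
        = norm (suminf (\<lambda>j. t j - c j))" unfolding dist_norm using sums_unique[OF ds] by simp
    also have "\<dots> \<le> (\<Sum>j. norm (t j - c j))" by (rule summable_norm[OF sn])
    also have "\<dots> \<le> suminf (\<lambda>k. a k n)" by (rule suminf_le[OF nb sn sa])
    finally show ?thesis .
  qed
  show ?thesis
  proof (rule uniform_limitI)
    fix e :: real assume e: "e > 0"
    have "eventually (\<lambda>n. suminf (\<lambda>k. a k n) < e) sequentially"
      using order_tendstoD(2)[OF Elim e] .
    then show "\<forall>\<^sub>F n in sequentially. \<forall>z\<in>K. dist (of_real ((2*real n) powr (1-l) * Gamma l) * gegenbauer l (4*n) (z / of_nat (4*n))) (cos z) < e"
      using eventually_gt_at_top[of 0]
    proof eventually_elim
      case (elim n)
      show ?case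
      proof
        fix z assume z: "z \<in> K"
        show "dist (of_real ((2*real n) powr (1-l) * Gamma l) * gegenbauer l (4*n) (z / of_nat (4*n))) (cos z) < e"
          using key[OF elim(2) z] elim(1) by linarith
      qed
    qed
  qed
qed



lemma AA0_bounded: assumes "0 < l" obtains B where "\<And>n. AA l n 0 \<le> B" "B \<ge> 0"
proof -
  have "Bseq (\<lambda>n. AA l n 0)" using AA0_lim[OF assms] by (intro convergent_imp_Bseq convergentI)
  then obtain C where "C > 0" "\<And>n. norm (AA l n 0) \<le> C" by (auto elim: BseqE)
  then have "\<And>n. AA l n 0 \<le> C" by (metis abs_le_D1 real_norm_def)
  then show ?thesis using that[of C] \<open>C > 0\<close> by auto
qed

theorem lemma3p1:
  fixes \<beta> :: real
  assumes "-1/2 < \<beta>" and "\<beta> < 1/2"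
  shows "(\<exists>D. \<exists>N. \<forall>n\<ge>N. n > 0 \<longrightarrow> (\<forall>z::complex.
            cmod (complex_of_real (real n powr (1/2 - \<beta>)) *
                  gegenbauer (\<beta> + 1/2) (4 * n) (z / of_nat (4 * n)))
            \<le> D * cosh (2 * cmod z)))
       \<and> (\<forall>z::complex. (\<lambda>n. complex_of_real ((2 * real n) powr (1/2 - \<beta>) * Gamma (\<beta> + 1/2)) *
                  gegenbauer (\<beta> + 1/2) (4 * n) (z / of_nat (4 * n))) \<longlonglongrightarrow> cos z)
       \<and> (\<forall>K::complex set. compact K \<longrightarrow>
            uniform_limit K (\<lambda>n z. complex_of_real ((2 * real n) powr (1/2 - \<beta>) * Gamma (\<beta> + 1/2)) *
                  gegenbauer (\<beta> + 1/2) (4 * n) (z / of_nat (4 * n))) cos sequentially)"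
proof -
  define l where "l = \<beta> + 1/2"
  have l: "0 < l" "l < 1" using assms by (auto simp: l_def)
  have e: "1/2 - \<beta> = 1 - l" by (simp add: l_def)
  have U: "\<forall>K::complex set. compact K \<longrightarrow>
            uniform_limit K (\<lambda>n z. complex_of_real ((2 * real n) powr (1/2 - \<beta>) * Gamma (\<beta> + 1/2)) *
                  gegenbauer (\<beta> + 1/2) (4 * n) (z / of_nat (4 * n))) cos sequentially"
    unfolding e l_def[symmetric] using main_unif[OF l] by blast
  have P: "\<forall>z::complex. (\<lambda>n. complex_of_real ((2 * real n) powr (1/2 - \<beta>) * Gamma (\<beta> + 1/2)) *
                  gegenbauer (\<beta> + 1/2) (4 * n) (z / of_nat (4 * n))) \<longlonglongrightarrow> cos z"
  proof
    fix z :: complex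
    show "(\<lambda>n. complex_of_real ((2 * real n) powr (1/2 - \<beta>) * Gamma (\<beta> + 1/2)) *
                  gegenbauer (\<beta> + 1/2) (4 * n) (z / of_nat (4 * n))) \<longlonglongrightarrow> cos z"
      using tendsto_uniform_limitI[OF U[rule_format, of "{z}"], of z] by simp
  qed
  obtain B where B: "\<And>n. AA l n 0 \<le> B" "B \<ge> 0" using AA0_bounded[OF l(1)] by blast
  define c where "c = 2 powr (1-l) * Gamma l"
  have c: "c > 0" using l by (simp add: c_def)
  have D: "\<exists>D. \<exists>N. \<forall>n\<ge>N. n > 0 \<longrightarrow> (\<forall>z::complex.
            cmod (complex_of_real (real n powr (1/2 - \<beta>)) *
                  gegenbauer (\<beta> + 1/2) (4 * n) (z / of_nat (4 * n)))
            \<le> D * cosh (2 * cmod z))"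
  proof (intro exI allI impI)
    fix n :: nat and z :: complex
    assume n: "n > 0"
    define G where "G = gegenbauer l (4 * n) (z / of_nat (4 * n))"
    have pw: "(2*real n) powr (1-l) = 2 powr (1-l) * real n powr (1-l)" by (simp add: powr_mult)
    have "c * cmod (complex_of_real (real n powr (1-l)) * G) = cmod (of_real ((2*real n) powr (1-l) * Gamma l) * G)"
      unfolding pw c_def using l by (simp add: norm_mult abs_mult mult_ac)
    also have "\<dots> \<le> B * exp (2 * cmod z)" unfolding G_def by (rule main_bound[OF l B(1) n])
    also have "\<dots> \<le> B * (2 * cosh (2 * cmod z))"
    proof -
      have "exp (2 * cmod z) \<le> 2 * cosh (2 * cmod z)"
        by (simp add: cosh_def)
      then show ?thesis using B(2) by (intro mult_left_mono) auto
    qed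
    finally have "cmod (complex_of_real (real n powr (1-l)) * G) \<le> (2*B/c) * cosh (2 * cmod z)"
      using c by (simp add: field_simps)
    then show "cmod (complex_of_real (real n powr (1/2 - \<beta>)) *
                  gegenbauer (\<beta> + 1/2) (4 * n) (z / of_nat (4 * n))) \<le> (2*B/c) * cosh (2 * cmod z)"
      unfolding e G_def l_def .
  qed
  show ?thesis using D P U by blast
qed


end
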